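(* If $U(x)$ is a polynomial with non-negative coefficients, then the function $V(x)=x(1+xU(x))$ is the covariance of some power series distribution.
   Context: For a power series $\omega(y)=\sum_k a_ky^k$ with non-negative coefficients and positive radius of convergence, the power series distribution (PSD) of $\omega$ with parameter $y>0$ is the law on $\{0,1,2,\dots\}$ given by $P\{\xi=k\}=a_ky^k/\omega(y)$. Its mean is $x(y)=y\omega'(y)/\omega(y)$ and its variance is $y\,x'(y)>0$, so $x(\cdot)$ has an inverse $y=f(x)$ on its range. The covariance of the PSD of $\omega$ is the function $V(x)=f(x)/f'(x)$, i.e. the variance expressed as a function of the mean $x$; a function is "the covariance of a PSD" if it equals this for some such $\omega$. *)

theory Defs
  imports "HOL-Analysis.Analysis" "HOL-Computational_Algebra.Polynomial"
begin

definition psd_omega :: "(nat \<Rightarrow> real) \<Rightarrow> real \<Rightarrow> real" where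
  "psd_omega a y = (\<Sum>k. a k * y ^ k)"

definition psd_mean :: "(nat \<Rightarrow> real) \<Rightarrow> real \<Rightarrow> real" where
  "psd_mean a y = y * deriv (psd_omega a) y / psd_omega a y"

definition psd_var :: "(nat \<Rightarrow> real) \<Rightarrow> real \<Rightarrow> real" where
  "psd_var a y = y * deriv (psd_mean a) y"

text \<open>V is the covariance of a PSD: there is a power series with non-negative
  coefficients and positive radius of convergence such that, for every admissible
  parameter y (0 < y < radius), V evaluated at the mean x(y) equals the variance
  y x'(y) (which is positive, so x has an inverse f and V(x) = f(x)/f'(x)).\<close>
definition is_psd_covariance :: "(real \<Rightarrow> real) \<Rightarrow> bool" where
  "is_psd_covariance V \<longleftrightarrow>
     (\<exists>a. (\<forall>k. a k \<ge> 0) \<and> conv_radius a > 0 \<and>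
        (\<forall>y. 0 < y \<and> ereal y < conv_radius a \<longrightarrow>
            psd_omega a y > 0 \<and> psd_var a y > 0 \<and>
            V (psd_mean a y) = psd_var a y))"

end

theory Submission
  imports Defs
begin

definition UX :: "real poly \<Rightarrow> real fps \<Rightarrow> real fps" where
  "UX U T = (\<Sum>i\<le>degree U. fps_const (coeff U i) * T ^ i)"

definition cval :: "real poly \<Rightarrow> (nat \<Rightarrow> real) \<Rightarrow> nat \<Rightarrow> real" where
  "cval U p n = (if n = 0 then 0 else if n = 1 then 1 else
      fps_nth (Abs_fps p ^ 2 * UX U (Abs_fps p)) n / (real n - 1))"

primrec pre :: "real poly \<Rightarrow> nat \<Rightarrow> nat \<Rightarrow> real" where
  "pre U 0 = (\<lambda>k. 0)"
| "pre U (Suc n) = (pre U n)(n := cval U (pre U n) n)"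

definition cc :: "real poly \<Rightarrow> nat \<Rightarrow> real" where
  "cc U n = pre U (Suc n) n"

function ww :: "real poly \<Rightarrow> nat \<Rightarrow> real" where
  "ww U n = (if n = 0 then 1 else (\<Sum>k=1..n. cc U k * ww U (n - k)) / real n)"
  by auto
termination by (relation "Wellfounded.measure snd") auto

declare ww.simps[simp del]

lemma pre_eq: "pre U n k = (if k < n then cc U k else 0)"
proof (induction n arbitrary: k)
  case 0 then show ?case by simp
next
  case (Suc n) then show ?case by (auto simp: cc_def)
qed

lemma agree_mult:
  assumes "\<forall>k<n. fps_nth A k = fps_nth B k" "\<forall>k<n. fps_nth C k = fps_nth D k"
  shows "\<forall>k<n. fps_nth (A * C) k = fps_nth (B * D) k"
  using assms by (auto simp: fps_mult_nth intro!: sum.cong)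

lemma agree_power:
  assumes "\<forall>k<n. fps_nth A k = fps_nth B k"
  shows "\<forall>k<n. fps_nth (A ^ j) k = fps_nth (B ^ j) k"
proof (induction j)
  case 0 then show ?case by simp
next
  case (Suc j) then show ?case using agree_mult[OF assms Suc] by simp
qed

lemma key_mult:
  fixes A B C D :: "real fps"
  assumes "\<forall>k<n. fps_nth A k = fps_nth B k" "\<forall>k<n. fps_nth C k = fps_nth D k"
    "fps_nth A 0 = 0" "fps_nth B 0 = 0" "fps_nth C 0 = 0" "fps_nth D 0 = 0"
  shows "fps_nth (A * C) n = fps_nth (B * D) n"
  unfolding fps_mult_nth
proof (rule sum.cong)
  fix i assume i: "i \<in> {0..n}"
  show "fps_nth A i * fps_nth C (n - i) = fps_nth B i * fps_nth D (n - i)"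
  proof (cases "i = 0 \<or> i = n")
    case True then show ?thesis using assms by auto
  next
    case False then show ?thesis using assms i by auto
  qed
qed simp

lemma Q_expand: "T ^ 2 * UX U T = (\<Sum>i\<le>degree U. fps_const (coeff U i) * (T * T ^ Suc i))"
  unfolding UX_def by (simp add: sum_distrib_left algebra_simps power2_eq_square)

lemma Q_agree:
  assumes "\<forall>k<n. fps_nth A k = fps_nth B k" "fps_nth A 0 = 0" "fps_nth B 0 = 0"
  shows "fps_nth (A ^ 2 * UX U A) n = fps_nth (B ^ 2 * UX U B) n"
proof -
  have "fps_nth (A * A ^ Suc i) n = fps_nth (B * B ^ Suc i) n" for i
    by (rule key_mult[OF assms(1) agree_power[OF assms(1)] assms(2,3)])
       (simp_all add: fps_nth_power_0 assms)
  then show ?thesis unfolding Q_expand by (simp add: fps_sum_nth)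
qed

definition XX :: "real poly \<Rightarrow> real fps" where "XX U = Abs_fps (cc U)"

lemma cc_0: "cc U 0 = 0" by (simp add: cc_def cval_def)
lemma cc_1: "cc U 1 = 1" by (simp add: cc_def cval_def)

lemma cc_ge2:
  assumes "n \<ge> 2"
  shows "(real n - 1) * cc U n = fps_nth (XX U ^ 2 * UX U (XX U)) n"
proof -
  have "cc U n = fps_nth (Abs_fps (pre U n) ^ 2 * UX U (Abs_fps (pre U n))) n / (real n - 1)"
    using assms by (simp add: cc_def cval_def)
  also have "fps_nth (Abs_fps (pre U n) ^ 2 * UX U (Abs_fps (pre U n))) n
      = fps_nth (XX U ^ 2 * UX U (XX U)) n"
    by (rule Q_agree) (auto simp: pre_eq XX_def cc_0)
  finally show ?thesis using assms by simp
qed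

lemma E1: "fps_X * fps_deriv (XX U) = XX U + XX U ^ 2 * UX U (XX U)"
proof (rule fps_ext)
  fix n
  have z: "fps_nth (XX U ^ 2 * UX U (XX U)) k = 0" if "k < 2" for k
  proof -
    have "fps_nth (XX U ^ 2 * UX U (XX U)) k = fps_nth (0 ^ 2 * UX U 0) k"
      by (rule Q_agree) (use that in \<open>auto simp: XX_def cc_0 cc_1 less_Suc_eq numeral_2_eq_2\<close>)
    then show ?thesis by simp
  qed
  show "fps_nth (fps_X * fps_deriv (XX U)) n = fps_nth (XX U + XX U ^ 2 * UX U (XX U)) n"
  proof (cases "n < 2")
    case True
    then have "n = 0 \<or> n = 1" by auto
    then show ?thesis using z[OF True] by (auto simp: XX_def cc_0 cc_1)
  next
    case False
    then show ?thesis using cc_ge2[of n U] by (auto simp: XX_def algebra_simps of_nat_diff)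
  qed
qed

definition nn :: "real fps \<Rightarrow> bool" where "nn F \<longleftrightarrow> (\<forall>k. fps_nth F k \<ge> 0)"

lemma nn_mult: "nn A \<Longrightarrow> nn B \<Longrightarrow> nn (A * B)"
  unfolding nn_def fps_mult_nth by (auto intro!: sum_nonneg)

lemma nn_power: "nn A \<Longrightarrow> nn (A ^ j)"
  by (induction j) (auto simp: nn_mult, auto simp: nn_def)

lemma nn_UX: "\<forall>i. coeff U i \<ge> 0 \<Longrightarrow> nn A \<Longrightarrow> nn (A ^ 2 * UX U A)"
  unfolding Q_expand nn_def fps_sum_nth
  using nn_power[of A] nn_mult[of A] unfolding nn_def
  by (auto intro!: sum_nonneg simp del: power_Suc)

lemma pre_nonneg: "\<forall>i. coeff U i \<ge> 0 \<Longrightarrow> pre U n k \<ge> 0"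
proof (induction n arbitrary: k)
  case 0 then show ?case by simp
next
  case (Suc n)
  have "nn (Abs_fps (pre U n))" using Suc by (auto simp: nn_def)
  then have "nn (Abs_fps (pre U n) ^ 2 * UX U (Abs_fps (pre U n)))" using nn_UX Suc.prems by blast
  then have "cval U (pre U n) n \<ge> 0" unfolding cval_def nn_def by auto
  then show ?case using Suc by auto
qed

lemma cc_nonneg: "\<forall>i. coeff U i \<ge> 0 \<Longrightarrow> cc U k \<ge> 0"
  unfolding cc_def by (rule pre_nonneg)

definition bb :: "nat \<Rightarrow> real" where "bb k = (if k = 0 then 0 else 1 / (real k)^2)"

lemma bb_nonneg: "bb k \<ge> 0" by (simp add: bb_def)
lemma bb_le1: "bb k \<le> 1" by (auto simp: bb_def field_simps)

lemma bb_sum: "(\<Sum>i=0..k. bb i) \<le> 2 - (if k = 0 then 2 else 1 / real k)"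
proof (induction k)
  case 0 then show ?case by (simp add: bb_def)
next
  case (Suc k)
  show ?case
  proof (cases "k = 0")
    case True then show ?thesis by (simp add: bb_def)
  next
    case False
    have "(\<Sum>i=0..Suc k. bb i) \<le> 2 - 1 / real k + 1 / (real k + 1)^2"
      using Suc False by (simp add: bb_def add.commute)
    also have "\<dots> \<le> 2 - 1 / real (Suc k)"
    proof -
      have e: "1 / real k - 1 / (real k + 1) = 1 / (real k * (real k + 1))"
        using False by (simp add: field_simps)
      have "1 / (real k + 1)^2 \<le> 1 / (real k * (real k + 1))"
        using False by (intro divide_left_mono) (auto simp: power2_eq_square intro!: mult_right_mono mult_pos_pos)
      then show ?thesis using e by (simp add: add.commute)
    qed
    finally show ?thesis by simp
  qed
qed

lemma bb_sum2: "(\<Sum>i=0..k. bb i) \<le> 2"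
proof (cases "k = 0")
  case True then show ?thesis by (simp add: bb_def)
next
  case False
  have "(\<Sum>i=0..k. bb i) \<le> 2 - 1 / real k" using bb_sum[of k] False by simp
  moreover have "0 \<le> 1 / real k" by simp
  ultimately show ?thesis by linarith
qed

lemma bb_pt: "bb i * bb (k - i) \<le> 2 / (real k)^2 * (bb i + bb (k - i))" if "i \<le> k" for i k
proof (cases "i = 0 \<or> i = k")
  case True then show ?thesis using that by (auto simp: bb_def)
next
  case False
  define a where "a = real i"
  define b where "b = real (k - i)"
  have a: "a > 0" and b: "b > 0" using False that by (auto simp: a_def b_def)
  have k: "real k = a + b" using that by (simp add: a_def b_def)
  have "1 / (a^2 * b^2) \<le> 2 / (a + b)^2 * (1 / a^2 + 1 / b^2)"
  proof -
    have "(a + b)^2 \<le> 2 * (a^2 + b^2)" using sum_squares_ge_zero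
      by (smt (verit) power2_diff power2_sum zero_le_power2)
    then show ?thesis using a b by (simp add: field_simps)
  qed
  then show ?thesis using False that by (simp add: bb_def k flip: a_def b_def)
qed

lemma bb_conv: "(\<Sum>i=0..k. bb i * bb (k - i)) \<le> 8 * bb k"
proof (cases "k = 0")
  case True then show ?thesis by (simp add: bb_def)
next
  case False
  have "(\<Sum>i=0..k. bb i * bb (k - i)) \<le> (\<Sum>i=0..k. 2 / (real k)^2 * (bb i + bb (k - i)))"
    by (intro sum_mono bb_pt) auto
  also have "\<dots> = 2 / (real k)^2 * (\<Sum>i=0..k. bb i + bb (k - i))"
    by (rule sum_distrib_left[symmetric])
  also have "\<dots> = 2 / (real k)^2 * ((\<Sum>i=0..k. bb i) + (\<Sum>i=0..k. bb (k - i)))"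
    by (simp only: sum.distrib)
  also have "(\<Sum>i=0..k. bb (k - i)) = (\<Sum>i=0..k. bb i)"
    by (rule sum.reindex_bij_witness[of _ "\<lambda>i. k - i" "\<lambda>i. k - i"]) auto
  also have "2 / (real k)^2 * ((\<Sum>i=0..k. bb i) + (\<Sum>i=0..k. bb i)) \<le> 2 / (real k)^2 * 4"
    using bb_sum2[of k] by (intro mult_left_mono) auto
  also have "\<dots> = 8 * bb k" using False by (simp add: bb_def)
  finally show ?thesis .
qed

lemma power_bound:
  assumes "nn A" "K > 0" "\<forall>k. fps_nth A k \<le> K ^ k * bb k / K"
  shows "fps_nth (A ^ Suc m) k \<le> 8 ^ m * K ^ k * bb k / K ^ Suc m"
proof (induction m arbitrary: k)
  case 0 then show ?case using assms by simp
next
  case (Suc m)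
  have "fps_nth (A ^ Suc (Suc m)) k = (\<Sum>i=0..k. fps_nth A i * fps_nth (A ^ Suc m) (k - i))"
    by (simp add: fps_mult_nth)
  also have "\<dots> \<le> (\<Sum>i=0..k. (K ^ i * bb i / K) * (8 ^ m * K ^ (k - i) * bb (k - i) / K ^ Suc m))"
    using assms(1) nn_power[OF assms(1), of "Suc m"] unfolding nn_def
    by (intro sum_mono mult_mono assms(3)[rule_format] Suc) (auto intro!: mult_nonneg_nonneg divide_nonneg_pos bb_nonneg assms(2) simp: less_imp_le[OF assms(2)])
  also have "\<dots> = (\<Sum>i=0..k. 8 ^ m * K ^ k / K ^ Suc (Suc m) * (bb i * bb (k - i)))"
  proof (rule sum.cong)
    fix i assume "i \<in> {0..k}"
    then have "K ^ i * K ^ (k - i) = K ^ k" by (simp flip: power_add)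
    then show "(K ^ i * bb i / K) * (8 ^ m * K ^ (k - i) * bb (k - i) / K ^ Suc m) =
       8 ^ m * K ^ k / K ^ Suc (Suc m) * (bb i * bb (k - i))"
      using assms(2) by (simp add: field_simps)
  qed simp
  also have "\<dots> = 8 ^ m * K ^ k / K ^ Suc (Suc m) * (\<Sum>i=0..k. bb i * bb (k - i))"
    by (simp add: sum_distrib_left)
  also have "\<dots> \<le> 8 ^ m * K ^ k / K ^ Suc (Suc m) * (8 * bb k)"
    using assms(2) by (intro mult_left_mono bb_conv) auto
  also have "\<dots> = 8 ^ Suc m * K ^ k * bb k / K ^ Suc (Suc m)" by simp
  finally show ?case .
qed

definition KK :: "real poly \<Rightarrow> real" where
  "KK U = 8 * (1 + (\<Sum>i\<le>degree U. coeff U i))"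

lemma KK_ge: "\<forall>i. coeff U i \<ge> 0 \<Longrightarrow> KK U \<ge> 8"
  unfolding KK_def by (simp add: sum_nonneg)

lemma Q_bound:
  assumes cU: "\<forall>i. coeff U i \<ge> 0" and A: "nn A" and bnd: "\<forall>k. fps_nth A k \<le> KK U ^ k * bb k / KK U"
  shows "fps_nth (A ^ 2 * UX U A) n \<le> KK U ^ n * bb n / KK U"
proof -
  define K where "K = KK U"
  define S where "S = (\<Sum>i\<le>degree U. coeff U i)"
  have K8: "K \<ge> 8" using KK_ge[OF cU] by (simp add: K_def)
  have KS: "K = 8 * (1 + S)" by (simp add: K_def S_def KK_def)
  have S0: "S \<ge> 0" unfolding S_def using cU by (simp add: sum_nonneg)
  define M where "M = K ^ n * bb n / K"
  have M0: "M \<ge> 0" using K8 by (simp add: M_def bb_nonneg)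
  have q: "8 / K \<le> 1" "0 \<le> 8 / K" using K8 by auto
  have "fps_nth (A ^ 2 * UX U A) n = (\<Sum>i\<le>degree U. coeff U i * fps_nth (A ^ Suc (Suc i)) n)"
    unfolding Q_expand by (simp add: fps_sum_nth)
  also have "\<dots> \<le> (\<Sum>i\<le>degree U. coeff U i * (8 / K * M))"
  proof (intro sum_mono mult_left_mono)
    fix i
    have "fps_nth (A ^ Suc (Suc i)) n \<le> 8 ^ Suc i * K ^ n * bb n / K ^ Suc (Suc i)"
      using power_bound[OF A _ bnd[folded K_def], of "Suc i" n] K8 unfolding K_def by simp
    also have "\<dots> = (8 / K) ^ Suc i * M"
      using K8 by (simp add: M_def field_simps power_divide)
    also have "\<dots> \<le> (8 / K) * M"
    proof -
      have "(8 / K) ^ i \<le> 1" using q by (intro power_le_one) auto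
      then have "(8 / K) * (8 / K) ^ i \<le> 8 / K" using q mult_left_le[of "(8 / K) ^ i" "8 / K"] by linarith
      then have "(8 / K) ^ Suc i \<le> 8 / K" by (simp only: power_Suc)
      then show ?thesis using M0 by (intro mult_right_mono) auto
    qed
    finally show "fps_nth (A ^ Suc (Suc i)) n \<le> 8 / K * M" .
  qed (use cU in auto)
  also have "\<dots> = S * (8 / K) * M" unfolding S_def sum_distrib_right by (simp add: mult.assoc)
  also have "\<dots> \<le> M"
  proof -
    have "S * (8 / K) \<le> 1" using S0 KS by (simp add: field_simps)
    moreover have "0 \<le> S * (8 / K)" using S0 K8 by simp
    ultimately show ?thesis using M0 mult_left_le_one_le[of M "S * (8 / K)"] by linarith
  qed
  finally show ?thesis by (simp add: M_def K_def)
qed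

lemma pre_bound:
  assumes cU: "\<forall>i. coeff U i \<ge> 0"
  shows "pre U n k \<le> KK U ^ k * bb k / KK U"
proof (induction n arbitrary: k)
  case 0 then show ?case using KK_ge[OF cU] by (simp add: bb_nonneg)
next
  case (Suc n)
  have K8: "KK U \<ge> 8" using KK_ge[OF cU] .
  have nnA: "nn (Abs_fps (pre U n))" using pre_nonneg[OF cU] by (auto simp: nn_def)
  have "cval U (pre U n) n \<le> KK U ^ n * bb n / KK U"
  proof -
    consider "n = 0" | "n = 1" | "n \<ge> 2" by linarith
    then show ?thesis
    proof cases
      case 1 then show ?thesis using K8 by (simp add: cval_def bb_def)
    next
      case 2 then show ?thesis using K8 by (simp add: cval_def bb_def)
    next
      case 3
      define q where "q = fps_nth (Abs_fps (pre U n) ^ 2 * UX U (Abs_fps (pre U n))) n"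
      have q0: "q \<ge> 0" using nn_UX[OF cU nnA] by (simp add: nn_def q_def)
      have qb: "q \<le> KK U ^ n * bb n / KK U" unfolding q_def
        by (rule Q_bound[OF cU nnA]) (use Suc in simp)
      have "cval U (pre U n) n = q / (real n - 1)" using 3 by (simp add: cval_def q_def)
      also have "\<dots> \<le> q" using 3 q0 by (simp add: divide_le_eq mult_le_cancel_left1)
      finally show ?thesis using qb by linarith
    qed
  qed
  then show ?case using Suc by simp
qed

lemma cc_bound:
  assumes cU: "\<forall>i. coeff U i \<ge> 0"
  shows "cc U k \<le> KK U ^ k"
proof -
  have K8: "KK U \<ge> 8" using KK_ge[OF cU] .
  have "cc U k \<le> KK U ^ k * bb k / KK U" unfolding cc_def by (rule pre_bound[OF cU])
  also have "\<dots> \<le> KK U ^ k * 1 / 1"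
    using K8 bb_le1[of k] by (intro frac_le mult_left_mono) (auto simp: bb_nonneg)
  finally show ?thesis by simp
qed

definition WW :: "real poly \<Rightarrow> real fps" where "WW U = Abs_fps (ww U)"

lemma ww_0: "ww U 0 = 1" by (simp add: ww.simps)

lemma ww_Suc: "ww U (Suc n) = (\<Sum>k=1..Suc n. cc U k * ww U (Suc n - k)) / real (Suc n)"
  by (subst ww.simps) simp

lemma ww_1: "ww U 1 = 1"
  using ww_Suc[of U 0] cc_1[of U] by (simp add: ww_0)

lemma ww_nonneg:
  assumes cU: "\<forall>i. coeff U i \<ge> 0"
  shows "ww U n \<ge> 0"
proof (induction n rule: less_induct)
  case (less n)
  show ?case
  proof (cases n)
    case 0 then show ?thesis by (simp add: ww_0)
  next
    case (Suc m)
    have "(\<Sum>k=1..n. cc U k * ww U (n - k)) \<ge> 0"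
      using less Suc by (intro sum_nonneg mult_nonneg_nonneg cc_nonneg[OF cU]) auto
    then show ?thesis using Suc ww_Suc[of U m] by simp
  qed
qed

lemma ww_bound:
  assumes cU: "\<forall>i. coeff U i \<ge> 0"
  shows "ww U n \<le> KK U ^ n"
proof (induction n rule: less_induct)
  case (less n)
  have K8: "KK U \<ge> 8" using KK_ge[OF cU] .
  show ?case
  proof (cases n)
    case 0 then show ?thesis by (simp add: ww_0)
  next
    case (Suc m)
    have "(\<Sum>k=1..n. cc U k * ww U (n - k)) \<le> (\<Sum>k=1..n. KK U ^ k * KK U ^ (n - k))"
      using less Suc K8 by (intro sum_mono mult_mono cc_bound[OF cU] ww_nonneg[OF cU]) auto
    also have "\<dots> = (\<Sum>k=1..n. KK U ^ n)"
      by (intro sum.cong) (auto simp flip: power_add)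
    also have "\<dots> = real n * KK U ^ n" by simp
    finally have "(\<Sum>k=1..n. cc U k * ww U (n - k)) \<le> real n * KK U ^ n" .
    then show ?thesis using Suc ww_Suc[of U m] by (simp only: divide_le_eq) (simp add: mult.commute)
  qed
qed


lemma E2: "fps_X * fps_deriv (WW U) = XX U * WW U"
proof (rule fps_ext)
  fix n
  show "fps_nth (fps_X * fps_deriv (WW U)) n = fps_nth (XX U * WW U) n"
  proof (cases n)
    case 0 then show ?thesis by (simp add: fps_mult_nth XX_def cc_0)
  next
    case (Suc m)
    have "fps_nth (XX U * WW U) n = (\<Sum>i=0..n. cc U i * ww U (n - i))"
      by (simp add: fps_mult_nth XX_def WW_def)
    also have "\<dots> = (\<Sum>i=1..n. cc U i * ww U (n - i))"
      using Suc by (simp add: sum.atLeast_Suc_atMost cc_0)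
    finally show ?thesis using Suc ww_Suc[of U m] by (simp add: WW_def)
  qed
qed


lemma WW_radius:
  assumes cU: "\<forall>i. coeff U i \<ge> 0"
  shows "fps_conv_radius (WW U) > 0"
proof -
  have K8: "KK U \<ge> 8" using KK_ge[OF cU] .
  define z where "z = 1 / (2 * KK U)"
  have z0: "z > 0" using K8 by (simp add: z_def)
  have "summable (\<lambda>n. ww U n * z ^ n)"
  proof (rule summable_comparison_test')
    show "summable (\<lambda>n. (1/2::real) ^ n)" by (rule summable_geometric) simp
    fix n
    have "norm (ww U n * z ^ n) = ww U n * z ^ n" using ww_nonneg[OF cU] z0 by simp
    also have "\<dots> \<le> KK U ^ n * z ^ n" using z0 by (intro mult_right_mono ww_bound[OF cU]) auto
    also have "\<dots> = (KK U * z) ^ n" by (simp add: power_mult_distrib)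
    also have "KK U * z = 1/2" using K8 by (simp add: z_def)
    finally show "norm (ww U n * z ^ n) \<le> (1/2) ^ n" .
  qed
  then have "conv_radius (ww U) \<ge> norm z" by (rule conv_radius_geI)
  then show ?thesis using z0 unfolding fps_conv_radius_def WW_def by (simp add: less_le_trans[of 0 "ereal z"])
qed


lemma alg_step:
  fixes Z X X1 W W1 W2 Ux :: "'a::comm_ring_1"
  assumes h1: "Z * X1 = X + X^2 * Ux" and h2: "Z * W1 = X * W" and h3: "W1 + Z * W2 = X1 * W + X * W1"
  shows "Z^2 * (W2 * W - W1^2) = Z^2 * (W1^2 * Ux)"
proof -
  have e: "Z * W2 = X1 * W + X * W1 - W1" using h3 by (metis add_diff_cancel_left')
  have "Z^2 * W2 * W = Z * W * (Z * W2)" by (simp add: power2_eq_square algebra_simps)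
  also have "\<dots> = Z * W * (X1 * W + X * W1 - W1)" by (simp only: e)
  also have "\<dots> = W^2 * (Z * X1) + (Z * W1) * (X * W) - (Z * W1) * W" by (simp add: power2_eq_square algebra_simps)
  also have "\<dots> = W^2 * (X + X^2 * Ux) + (X * W) * (X * W) - (X * W) * W" by (simp only: h1 h2)
  finally have a: "Z^2 * W2 * W = X^2 * W^2 * Ux + X^2 * W^2" by (simp add: power2_eq_square algebra_simps)
  have b: "Z^2 * W1^2 = X^2 * W^2" using h2 by (metis power_mult_distrib)
  have "Z^2 * (W2 * W - W1^2) = X^2 * W^2 * Ux" using a b by (simp add: algebra_simps)
  also have "\<dots> = Z^2 * (W1^2 * Ux)" using b by (simp add: algebra_simps)
  finally show ?thesis .
qed

lemma G_formal1:
  "fps_deriv (fps_deriv (WW U)) * WW U - (fps_deriv (WW U))^2 = (fps_deriv (WW U))^2 * UX U (XX U)"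
proof -
  have h3: "fps_deriv (WW U) + fps_X * fps_deriv (fps_deriv (WW U)) =
      fps_deriv (XX U) * WW U + XX U * fps_deriv (WW U)"
    using arg_cong[OF E2[of U], of fps_deriv] by (simp add: fps_deriv_mult algebra_simps)
  have "(fps_X::real fps)^2 * (fps_deriv (fps_deriv (WW U)) * WW U - (fps_deriv (WW U))^2) =
        fps_X^2 * ((fps_deriv (WW U))^2 * UX U (XX U))"
    by (rule alg_step[OF E1 E2 h3])
  then show ?thesis by (simp add: fps_X_power_mult_nth)
qed

lemma G_formal:
  "WW U ^ degree U * (fps_deriv (fps_deriv (WW U)) * WW U - (fps_deriv (WW U))^2) =
   (fps_deriv (WW U))^2 * (\<Sum>i\<le>degree U. fps_const (coeff U i) * (fps_X * fps_deriv (WW U)) ^ i * WW U ^ (degree U - i))"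
proof -
  have "WW U ^ degree U * UX U (XX U) =
      (\<Sum>i\<le>degree U. fps_const (coeff U i) * (fps_X * fps_deriv (WW U)) ^ i * WW U ^ (degree U - i))"
    unfolding UX_def sum_distrib_left
  proof (rule sum.cong)
    fix i assume "i \<in> {..degree U}"
    then have "WW U ^ degree U = WW U ^ i * WW U ^ (degree U - i)" by (simp flip: power_add)
    then show "WW U ^ degree U * (fps_const (coeff U i) * XX U ^ i) =
        fps_const (coeff U i) * (fps_X * fps_deriv (WW U)) ^ i * WW U ^ (degree U - i)"
      by (simp add: E2 power_mult_distrib algebra_simps)
  qed simp
  then show ?thesis using G_formal1[of U] by (metis mult.left_commute)
qed

lemma ok_mult: "ereal \<bar>y::real\<bar> < fps_conv_radius f \<Longrightarrow> ereal \<bar>y::real\<bar> < fps_conv_radius g \<Longrightarrow>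
   ereal \<bar>y::real\<bar> < fps_conv_radius (f * (g :: real fps))"
  using fps_conv_radius_mult[of f g] by (auto simp: min_def split: if_splits)

lemma ok_add: "ereal \<bar>y::real\<bar> < fps_conv_radius f \<Longrightarrow> ereal \<bar>y::real\<bar> < fps_conv_radius g \<Longrightarrow>
   ereal \<bar>y::real\<bar> < fps_conv_radius (f + (g :: real fps))"
  using fps_conv_radius_add[of f g] by (auto simp: min_def split: if_splits)

lemma ok_diff: "ereal \<bar>y::real\<bar> < fps_conv_radius f \<Longrightarrow> ereal \<bar>y::real\<bar> < fps_conv_radius g \<Longrightarrow>
   ereal \<bar>y::real\<bar> < fps_conv_radius (f - (g :: real fps))"
  using fps_conv_radius_diff[of f g] by (auto simp: min_def split: if_splits)

lemma ok_power: "ereal \<bar>y::real\<bar> < fps_conv_radius f \<Longrightarrow>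
   ereal \<bar>y::real\<bar> < fps_conv_radius ((f :: real fps) ^ n)"
  using fps_conv_radius_power[of f n] by auto

lemma ok_const: "ereal \<bar>y::real\<bar> < fps_conv_radius (fps_const (c::real))" by simp
lemma ok_X: "ereal \<bar>y::real\<bar> < fps_conv_radius (fps_X :: real fps)" by simp

lemma eval_sum_fps:
  fixes F :: "nat \<Rightarrow> real fps"
  assumes "finite I" "\<forall>i\<in>I. ereal \<bar>y::real\<bar> < fps_conv_radius (F i)"
  shows "eval_fps (\<Sum>i\<in>I. F i) y = (\<Sum>i\<in>I. eval_fps (F i) y) \<and>
         ereal \<bar>y::real\<bar> < fps_conv_radius (\<Sum>i\<in>I. F i)"
  using assms
proof (induction I rule: finite_induct)
  case empty then show ?case by simp
next
  case (insert x I)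
  then show ?case using ok_add[of y "F x" "sum F I"] by (auto simp: eval_fps_add)
qed

lemma pos_eval:
  fixes F :: "real fps"
  assumes "\<forall>n. fps_nth F n \<ge> 0" "fps_nth F 0 > 0" "y \<ge> 0" "ereal (norm y) < fps_conv_radius F"
  shows "eval_fps F y > 0"
proof -
  have "summable (\<lambda>n. fps_nth F n * y ^ n)" using summable_fps[OF assms(4)] .
  then have "0 < (\<Sum>n. fps_nth F n * y ^ n)"
    by (rule suminf_pos2[where i=0]) (use assms in auto)
  then show ?thesis by (simp add: eval_fps_def)
qed

lemma G_eval:
  fixes y :: real
  assumes yR: "ereal \<bar>y\<bar> < fps_conv_radius (WW U)"
  shows "eval_fps (WW U) y ^ degree U * (eval_fps (fps_deriv (fps_deriv (WW U))) y * eval_fps (WW U) y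
            - (eval_fps (fps_deriv (WW U)) y)^2) =
         (eval_fps (fps_deriv (WW U)) y)^2 * (\<Sum>i\<le>degree U. coeff U i * (y * eval_fps (fps_deriv (WW U)) y) ^ i
            * eval_fps (WW U) y ^ (degree U - i))"
proof -
  define W where "W = WW U"
  have r0: "ereal \<bar>y\<bar> < fps_conv_radius W" using yR by (simp add: W_def)
  have r1: "ereal \<bar>y\<bar> < fps_conv_radius (fps_deriv W)"
    using r0 fps_conv_radius_deriv[of W] by (rule less_le_trans)
  have r2: "ereal \<bar>y\<bar> < fps_conv_radius (fps_deriv (fps_deriv W))"
    using r1 fps_conv_radius_deriv[of "fps_deriv W"] by (rule less_le_trans)
  note oks = ok_mult ok_add ok_diff ok_power ok_const ok_X r0 r1 r2
  have rt: "\<forall>i\<in>{..degree U}. ereal \<bar>y\<bar> < fps_conv_radius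
      (fps_const (coeff U i) * (fps_X * fps_deriv W) ^ i * W ^ (degree U - i))"
    by (simp add: oks)
  note es = eval_sum_fps[OF finite_atMost rt]
  have "eval_fps (W ^ degree U * (fps_deriv (fps_deriv W) * W - (fps_deriv W)^2)) y =
        eval_fps ((fps_deriv W)^2 * (\<Sum>i\<le>degree U. fps_const (coeff U i) * (fps_X * fps_deriv W) ^ i * W ^ (degree U - i))) y"
    using G_formal[of U] by (simp add: W_def)
  then show ?thesis
    using es by (simp add: W_def[symmetric] oks eval_fps_mult eval_fps_power eval_fps_diff)
qed

theorem corollary2:
  fixes U :: "real poly"
  assumes "\<forall>i. coeff U i \<ge> 0"
  shows "is_psd_covariance (\<lambda>x. x * (1 + x * poly U x))"
proof -
  note cU = assms
  define a where "a = ww U"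
  define W where "W = WW U"
  define R where "R = fps_conv_radius W"
  have Ra: "conv_radius a = R" by (simp add: R_def W_def a_def WW_def fps_conv_radius_def)
  show ?thesis
  unfolding is_psd_covariance_def
proof (intro exI[of _ a] conjI allI impI)
  show "a k \<ge> 0" for k using ww_nonneg[OF cU] by (simp add: a_def)
  show "conv_radius a > 0" using WW_radius[OF cU] by (simp add: Ra R_def W_def)
  fix y :: real
  assume yy: "0 < y \<and> ereal y < conv_radius a"
  then have y0: "y > 0" and yR: "ereal \<bar>y\<bar> < R" using Ra by auto
  have omega: "psd_omega a = eval_fps W"
    by (rule ext) (simp add: psd_omega_def eval_fps_def W_def WW_def a_def)
  have rd: "fps_conv_radius W \<le> fps_conv_radius (fps_deriv W)" by (rule fps_conv_radius_deriv)
  have rdd: "fps_conv_radius (fps_deriv W) \<le> fps_conv_radius (fps_deriv (fps_deriv W))" by (rule fps_conv_radius_deriv)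
  have dom: "deriv (psd_omega a) z = eval_fps (fps_deriv W) z" if "ereal \<bar>z\<bar> < R" for z :: real
    using eval_fps_deriv[of z W] that by (simp add: omega R_def)
  define f where "f = eval_fps W y"
  define f1 where "f1 = eval_fps (fps_deriv W) y"
  define f2 where "f2 = eval_fps (fps_deriv (fps_deriv W)) y"
  have f0: "f > 0" unfolding f_def
    by (rule pos_eval) (use yR y0 ww_nonneg[OF cU] in \<open>auto simp: R_def W_def WW_def ww_0\<close>)
  have f10: "f1 > 0" unfolding f1_def
  proof (rule pos_eval)
    show "\<forall>n. 0 \<le> fps_nth (fps_deriv W) n" using ww_nonneg[OF cU] by (simp add: W_def WW_def)
    show "0 < fps_nth (fps_deriv W) 0" using ww_1[of U] by (simp add: W_def WW_def)
    show "ereal (norm y) < fps_conv_radius (fps_deriv W)" using yR rd by (auto simp: R_def)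
  qed (use y0 in auto)
  have meq: "psd_mean a z = z * eval_fps (fps_deriv W) z / eval_fps W z" if "z \<in> eball 0 R" for z :: real
    using that dom[of z] by (simp add: psd_mean_def omega)
  have d1: "(eval_fps W has_field_derivative f1) (at y)"
    unfolding f1_def by (rule has_field_derivative_eval_fps) (use yR in \<open>simp add: R_def\<close>)
  have d2: "(eval_fps (fps_deriv W) has_field_derivative f2) (at y)"
    unfolding f2_def by (rule has_field_derivative_eval_fps) (use yR rd in \<open>auto simp: R_def\<close>)
  have dm: "((\<lambda>z. z * eval_fps (fps_deriv W) z / eval_fps W z) has_field_derivative
       ((f1 + y * f2) * f - y * f1 * f1) / (f * f)) (at y)"
    using DERIV_divide[OF DERIV_mult[OF DERIV_ident d2] d1] f0
    by (simp add: f_def f1_def algebra_simps)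
  have dm2: "(psd_mean a has_field_derivative ((f1 + y * f2) * f - y * f1 * f1) / (f * f)) (at y)"
    by (rule has_field_derivative_transform_within_open[OF dm open_eball, of 0 R])
       (use yR meq in auto)
  have var: "psd_var a y = y * (((f1 + y * f2) * f - y * f1 * f1) / (f * f))"
    unfolding psd_var_def using DERIV_imp_deriv[OF dm2] by simp
  define x where "x = y * f1 / f"
  have mean: "psd_mean a y = x" using meq[of y] yR by (simp add: x_def f_def f1_def)
  have x0: "x > 0" using y0 f0 f10 by (simp add: x_def)
  have G: "f ^ degree U * (f2 * f - f1^2) = f1^2 * (\<Sum>i\<le>degree U. coeff U i * (y * f1) ^ i * f ^ (degree U - i))"
    using G_eval[of y U] yR by (simp add: f_def f1_def f2_def W_def R_def)
  have "f ^ degree U * poly U x = (\<Sum>i\<le>degree U. coeff U i * (y * f1) ^ i * f ^ (degree U - i))"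
    unfolding poly_altdef sum_distrib_left
  proof (rule sum.cong)
    fix i assume "i \<in> {..degree U}"
    then have "f ^ degree U = f ^ i * f ^ (degree U - i)" by (simp flip: power_add)
    then show "f ^ degree U * (coeff U i * x ^ i) = coeff U i * (y * f1) ^ i * f ^ (degree U - i)"
      using f0 by (simp add: x_def power_divide power_mult_distrib)
  qed simp
  with G have "f ^ degree U * (f2 * f - f1^2) = f ^ degree U * (f1^2 * poly U x)" by simp
  then have key: "f2 * f - f1^2 = f1^2 * poly U x" using f0 by simp
  have pU: "poly U x \<ge> 0" unfolding poly_altdef using cU x0 by (auto intro!: sum_nonneg)
  have "psd_var a y = x + x^2 * poly U x"
  proof -
    have "psd_var a y = y * f1 / f + y^2 * (f2 * f - f1^2) / f^2"
      using f0 unfolding var by (simp add: field_simps power2_eq_square)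
    also have "\<dots> = x + x^2 * poly U x"
      unfolding key x_def using f0 by (simp add: field_simps power2_eq_square)
    finally show ?thesis .
  qed
  then have vx: "psd_var a y = x * (1 + x * poly U x)" by (simp add: algebra_simps power2_eq_square)
  show "psd_omega a y > 0" using f0 by (simp add: omega f_def)
  show "psd_var a y > 0" unfolding vx using x0 pU by (simp add: add_pos_nonneg)
  show "(\<lambda>x. x * (1 + x * poly U x)) (psd_mean a y) = psd_var a y" unfolding mean vx by simp
qed
qed

end
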